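(* Let $G$ be a directed graph on vertex set $V$ with $|V|=n$ odd and integer edge weights in $[-M,M]$, $M\ge1$; extend $w$ to all ordered pairs $(u,v)\in V\times V$ (including $u=v$) by setting $w(u,v)=4M$ when $(u,v)$ is not an edge. Let $H=100M$. Let $G'$ be the undirected graph with vertex set $\{u_A,u_B,u_{B'},u_C,u_{C'}:u\in V\}$ and, for all $u,v\in V$ (not necessarily distinct), edges $u_A v_B$ of weight $3H+w(u,v)$, $u_A v_{B'}$ of weight $3H-w(u,v)$, $u_A v_C$ of weight $6H-w(v,u)$, $u_A v_{C'}$ of weight $3H+w(v,u)$, $u_Bv_C$ of weight $3H+w(u,v)$, and (for $u\ne v$) $u_Av_A$ of weight $H$. Let $G'_0$ be $G'$ with every weight multiplied by $4n$, and write $A=\{u_A:u\in V\}$. For $S\subseteq A$ let $G'_S$ be obtained from $G'_0$ by subtracting $1$ from the weight of every edge $s v_B$ and $s v_C$ with $s\in S$, and adding $1$ to the weight of every edge $s v_{B'}$ with $s\in S$. Then the median value $\min_{p}\sum_{q}d_{G'_S}(p,q)$ of $G'_S$ is odd if and only if $S$ contains a vertex $p$ attaining $\min_{p}\sum_q d_{G'}(p,q)$.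
   Context: $d_X(p,q)$ denotes shortest-path distance in the weighted graph $X$; sums $\sum_q$ range over all vertices of the graph. *)

theory Defs
  imports Main
begin

text \<open>A weighted graph on vertex set Vs is a function g with g x y = Some c iff xy is an
edge of weight c (g is assumed symmetric for undirected graphs).\<close>

fun walk_weight :: "('v \<Rightarrow> 'v \<Rightarrow> int option) \<Rightarrow> 'v list \<Rightarrow> int" where
  "walk_weight g (x # y # xs) = the (g x y) + walk_weight g (y # xs)"
| "walk_weight g _ = 0"

definition is_walk :: "'v set \<Rightarrow> ('v \<Rightarrow> 'v \<Rightarrow> int option) \<Rightarrow> 'v list \<Rightarrow> bool" where
  "is_walk Vs g xs \<longleftrightarrow> xs \<noteq> [] \<and> set xs \<subseteq> Vs \<and>
     (\<forall>i. Suc i < length xs \<longrightarrow> g (xs ! i) (xs ! Suc i) \<noteq> None)"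

definition gdist :: "'v set \<Rightarrow> ('v \<Rightarrow> 'v \<Rightarrow> int option) \<Rightarrow> 'v \<Rightarrow> 'v \<Rightarrow> int" where
  "gdist Vs g p q = Inf {walk_weight g xs | xs. is_walk Vs g xs \<and> hd xs = p \<and> last xs = q}"

definition dist_sum :: "'v set \<Rightarrow> ('v \<Rightarrow> 'v \<Rightarrow> int option) \<Rightarrow> 'v \<Rightarrow> int" where
  "dist_sum Vs g p = (\<Sum>q\<in>Vs. gdist Vs g p q)"

definition median_value :: "'v set \<Rightarrow> ('v \<Rightarrow> 'v \<Rightarrow> int option) \<Rightarrow> int" where
  "median_value Vs g = Min (dist_sum Vs g ` Vs)"

datatype part = PA | PB | PB' | PC | PC'

definition wext :: "('a \<times> 'a) set \<Rightarrow> ('a \<Rightarrow> 'a \<Rightarrow> int) \<Rightarrow> int \<Rightarrow> 'a \<Rightarrow> 'a \<Rightarrow> int" where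
  "wext E w M u v = (if (u, v) \<in> E then w u v else 4 * M)"

text \<open>Edges of G' in one canonical orientation; H = 100M.\<close>
fun gp_dir :: "'a set \<Rightarrow> ('a \<times> 'a) set \<Rightarrow> ('a \<Rightarrow> 'a \<Rightarrow> int) \<Rightarrow> int
     \<Rightarrow> 'a \<times> part \<Rightarrow> 'a \<times> part \<Rightarrow> int option" where
  "gp_dir V E w M (u, PA) (v, PB) =
     (if u \<in> V \<and> v \<in> V then Some (3 * (100 * M) + wext E w M u v) else None)"
| "gp_dir V E w M (u, PA) (v, PB') =
     (if u \<in> V \<and> v \<in> V then Some (3 * (100 * M) - wext E w M u v) else None)"
| "gp_dir V E w M (u, PA) (v, PC) =
     (if u \<in> V \<and> v \<in> V then Some (6 * (100 * M) - wext E w M v u) else None)"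
| "gp_dir V E w M (u, PA) (v, PC') =
     (if u \<in> V \<and> v \<in> V then Some (3 * (100 * M) + wext E w M v u) else None)"
| "gp_dir V E w M (u, PB) (v, PC) =
     (if u \<in> V \<and> v \<in> V then Some (3 * (100 * M) + wext E w M u v) else None)"
| "gp_dir V E w M (u, PA) (v, PA) =
     (if u \<in> V \<and> v \<in> V \<and> u \<noteq> v then Some (100 * M) else None)"
| "gp_dir V E w M _ _ = None"

definition gp :: "'a set \<Rightarrow> ('a \<times> 'a) set \<Rightarrow> ('a \<Rightarrow> 'a \<Rightarrow> int) \<Rightarrow> int
     \<Rightarrow> 'a \<times> part \<Rightarrow> 'a \<times> part \<Rightarrow> int option" where
  "gp V E w M x y = (case gp_dir V E w M x y of Some c \<Rightarrow> Some c | None \<Rightarrow> gp_dir V E w M y x)"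

definition gp_verts :: "'a set \<Rightarrow> ('a \<times> part) set" where
  "gp_verts V = V \<times> UNIV"

fun pert_dir :: "('a \<times> part) set \<Rightarrow> 'a \<times> part \<Rightarrow> 'a \<times> part \<Rightarrow> int" where
  "pert_dir S s (v, PB) = (if s \<in> S then -1 else 0)"
| "pert_dir S s (v, PC) = (if s \<in> S then -1 else 0)"
| "pert_dir S s (v, PB') = (if s \<in> S then 1 else 0)"
| "pert_dir S s _ = 0"

definition gpS :: "'a set \<Rightarrow> ('a \<times> 'a) set \<Rightarrow> ('a \<Rightarrow> 'a \<Rightarrow> int) \<Rightarrow> int \<Rightarrow> ('a \<times> part) set
     \<Rightarrow> 'a \<times> part \<Rightarrow> 'a \<times> part \<Rightarrow> int option" where
  "gpS V E w M S x y = (case gp V E w M x y of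
      None \<Rightarrow> None
    | Some c \<Rightarrow> Some (4 * int (card V) * c + pert_dir S x y + pert_dir S y x))"

end

theory Submission imports Defs begin

lemma is_walk_single[simp]: "is_walk Vs g [x] \<longleftrightarrow> x \<in> Vs"
  by (auto simp: is_walk_def)

lemma is_walk_cons2[simp]: "is_walk Vs g (x # y # xs) \<longleftrightarrow> x \<in> Vs \<and> g x y \<noteq> None \<and> is_walk Vs g (y # xs)"
proof
  assume h: "is_walk Vs g (x # y # xs)"
  have "g x y \<noteq> None" using h unfolding is_walk_def by (auto dest: spec[of _ 0])
  moreover have "is_walk Vs g (y # xs)" using h unfolding is_walk_def
    by (auto dest!: spec[of _ "Suc i" for i])
  ultimately show "x \<in> Vs \<and> g x y \<noteq> None \<and> is_walk Vs g (y # xs)" using h by (auto simp: is_walk_def)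
next
  assume h: "x \<in> Vs \<and> g x y \<noteq> None \<and> is_walk Vs g (y # xs)"
  show "is_walk Vs g (x # y # xs)" unfolding is_walk_def
  proof (intro conjI allI impI)
    show "set (x # y # xs) \<subseteq> Vs" using h by (auto simp: is_walk_def)
    fix i assume "Suc i < length (x # y # xs)"
    then show "g ((x # y # xs) ! i) ((x # y # xs) ! Suc i) \<noteq> None"
      using h by (cases i) (auto simp: is_walk_def)
  qed simp
qed

definition is_pot :: "'v set \<Rightarrow> ('v \<Rightarrow> 'v \<Rightarrow> int option) \<Rightarrow> ('v \<Rightarrow> int) \<Rightarrow> bool" where
  "is_pot Vs g f \<longleftrightarrow> (\<forall>x\<in>Vs. \<forall>y\<in>Vs. \<forall>c. g x y = Some c \<longrightarrow> f y \<le> f x + c)"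

lemma walk_pot: "is_walk Vs g xs \<Longrightarrow> is_pot Vs g f \<Longrightarrow> f (last xs) - f (hd xs) \<le> walk_weight g xs"
proof (induction g xs rule: walk_weight.induct)
  case (1 g x y xs)
  then have w: "is_walk Vs g (y # xs)" and xV: "x \<in> Vs" and e: "g x y \<noteq> None" by auto
  have yV: "y \<in> Vs" using w by (auto simp: is_walk_def)
  obtain c where c: "g x y = Some c" using e by auto
  have "f y \<le> f x + c" using "1.prems"(2) xV yV c by (auto simp: is_pot_def)
  moreover have "f (last (y#xs)) - f y \<le> walk_weight g (y # xs)" using 1 w by simp
  ultimately show ?case using c by simp
next
  case ("2_1" g)
  then show ?case by (simp add: is_walk_def)
next
  case ("2_2" g v)
  then show ?case by simp
qed

lemma gdist_ge:
  assumes "is_pot Vs g f" "is_walk Vs g xs" "hd xs = p" "last xs = q"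
  shows "f q - f p \<le> gdist Vs g p q"
  unfolding gdist_def
proof (rule cInf_greatest)
  show "{walk_weight g xs |xs. is_walk Vs g xs \<and> hd xs = p \<and> last xs = q} \<noteq> {}"
    using assms(2-4) by auto
next
  fix x assume "x \<in> {walk_weight g xs |xs. is_walk Vs g xs \<and> hd xs = p \<and> last xs = q}"
  then obtain ys where "x = walk_weight g ys" "is_walk Vs g ys" "hd ys = p" "last ys = q" by auto
  then show "f q - f p \<le> x" using walk_pot[OF _ assms(1)] by metis
qed

lemma gdist_le:
  assumes "is_pot Vs g f" "is_walk Vs g xs" "hd xs = p" "last xs = q"
  shows "gdist Vs g p q \<le> walk_weight g xs"
  unfolding gdist_def
proof (rule cInf_lower)
  show "walk_weight g xs \<in> {walk_weight g xs |xs. is_walk Vs g xs \<and> hd xs = p \<and> last xs = q}"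
    using assms(2-4) by auto
  show "bdd_below {walk_weight g xs |xs. is_walk Vs g xs \<and> hd xs = p \<and> last xs = q}"
    unfolding bdd_below_def
  proof (intro exI ballI)
    fix x assume "x \<in> {walk_weight g xs |xs. is_walk Vs g xs \<and> hd xs = p \<and> last xs = q}"
    then obtain ys where "x = walk_weight g ys" "is_walk Vs g ys" "hd ys = p" "last ys = q" by auto
    then show "f q - f p \<le> x" using walk_pot[OF _ assms(1)] by metis
  qed
qed

lemma part_UNIV: "(UNIV :: part set) = {PA, PB, PB', PC, PC'}"
  using part.exhaust by auto

locale mt =
  fixes V :: "'a set" and E :: "('a \<times> 'a) set" and w :: "'a \<Rightarrow> 'a \<Rightarrow> int" and M :: int
    and S :: "('a \<times> part) set"
  assumes finV: "finite V" and oddn: "odd (card V)" and M1: "M \<ge> 1"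
    and wbd: "\<forall>(u, v)\<in>E. \<bar>w u v\<bar> \<le> M" and SA: "S \<subseteq> (\<lambda>u. (u, PA)) ` V"
begin

abbreviation "wx \<equiv> wext E w M"

lemma wx_bd: "-M \<le> wx u v \<and> wx u v \<le> 4*M"
  using wbd M1 by (auto simp: wext_def)

definition cmin :: "'a \<Rightarrow> 'a \<Rightarrow> int" where
  "cmin u v = Min (insert (600*M - wx v u) ((\<lambda>x. 600*M + wx u x + wx x v) ` V))"

lemma cmin_le1: "cmin u v \<le> 600*M - wx v u"
  unfolding cmin_def using finV by simp

lemma cmin_le2: "x \<in> V \<Longrightarrow> cmin u v \<le> 600*M + wx u x + wx x v"
  unfolding cmin_def using finV by simp

lemma cmin_ge: "600*M - 4*M \<le> cmin u v"
  unfolding cmin_def using finV wx_bd[of v u] M1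
  apply (auto simp: Min_ge_iff)
  subgoal for x using wx_bd[of u x] wx_bd[of x v] by linarith
  done

lemma cmin_cases: "cmin u v = 600*M - wx v u \<or> (\<exists>x\<in>V. cmin u v = 600*M + wx u x + wx x v)"
proof -
  have "cmin u v \<in> insert (600*M - wx v u) ((\<lambda>x. 600*M + wx u x + wx x v) ` V)"
    unfolding cmin_def using finV by (intro Min_in) auto
  then show ?thesis by auto
qed

definition f0 :: "'a \<Rightarrow> 'a \<times> part \<Rightarrow> int" where
  "f0 u q = (case q of (v, PA) \<Rightarrow> if v = u then 0 else 100*M
     | (v, PB) \<Rightarrow> 300*M + wx u v | (v, PB') \<Rightarrow> 300*M - wx u v
     | (v, PC) \<Rightarrow> cmin u v | (v, PC') \<Rightarrow> 300*M + wx v u)"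

definition sg :: "'a \<Rightarrow> int" where "sg u = (if (u, PA) \<in> S then 1 else 0)"

definition adj :: "'a \<Rightarrow> 'a \<times> part \<Rightarrow> int" where
  "adj u q = (case q of (v, PB) \<Rightarrow> - sg u | (v, PB') \<Rightarrow> sg u | (v, PC) \<Rightarrow> - sg u | _ \<Rightarrow> 0)"

definition pp :: "'a \<times> part \<Rightarrow> 'a \<times> part \<Rightarrow> int" where
  "pp x y = pert_dir S x y + pert_dir S y x"

lemma notS: "(a, P) \<in> S \<Longrightarrow> P = PA"
  using SA by auto

lemma notS'[simp]: "(a, PB) \<notin> S" "(a, PB') \<notin> S" "(a, PC) \<notin> S" "(a, PC') \<notin> S"
  using notS by blast+

lemma edge_f0:
  assumes "gp V E w M x y = Some c"
  shows "f0 u y + 1 \<le> f0 u x + c \<or> (f0 u y \<le> f0 u x + c \<and> adj u y \<le> adj u x + pp x y)"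
proof -
  obtain a P b Q where xy: "x = (a, P)" "y = (b, Q)" by (cases x, cases y) auto
  note bd = wx_bd[of u b] wx_bd[of a b] wx_bd[of b a] wx_bd[of b u] wx_bd[of u a] wx_bd[of a u]
    cmin_ge[of u b] cmin_ge[of u a] cmin_le1[of u b] cmin_le1[of u a]
  have c2: "a \<in> V \<Longrightarrow> cmin u b \<le> 600*M + wx u a + wx a b"  "b \<in> V \<Longrightarrow> cmin u a \<le> 600*M + wx u b + wx b a"
    by (auto intro: cmin_le2)
  show ?thesis using assms M1 bd c2 unfolding xy
    by (cases P; cases Q) (auto simp: gp_def f0_def adj_def pp_def sg_def split: if_splits)
qed


abbreviation "N \<equiv> 4 * int (card V)"
abbreviation "Vs \<equiv> gp_verts V"
abbreviation "G \<equiv> gp V E w M"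
abbreviation "GS \<equiv> gpS V E w M S"

lemma n1: "card V \<ge> 1" using oddn by (cases "card V") auto

lemma N4: "N \<ge> 4" using n1 by simp

lemma gpS_eq: "GS x y = map_option (\<lambda>c. N * c + pp x y) (G x y)"
  by (auto simp: gpS_def pp_def split: option.splits)

lemma walk_S_iff: "is_walk Vs GS xs \<longleftrightarrow> is_walk Vs G xs"
  unfolding is_walk_def gpS_eq by simp

lemma pp_bd: "-1 \<le> pp x y \<and> pp x y \<le> 1"
proof -
  obtain a P b Q where xy: "x = (a, P)" "y = (b, Q)" by (cases x, cases y) auto
  show ?thesis unfolding xy by (cases P; cases Q) (auto simp: pp_def)
qed

lemma adj_bd: "-1 \<le> adj u q \<and> adj u q \<le> 1"
  by (cases q; cases "snd q") (auto simp: adj_def sg_def)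

lemma pot_G: "is_pot Vs G (f0 u)"
  unfolding is_pot_def
proof (intro ballI allI impI)
  fix x y c assume "G x y = Some c"
  from edge_f0[OF this, of u] show "f0 u y \<le> f0 u x + c" by auto
qed

definition fS :: "'a \<Rightarrow> 'a \<times> part \<Rightarrow> int" where
  "fS u q = N * f0 u q + adj u q"

lemma pot_GS: "is_pot Vs GS (fS u)"
  unfolding is_pot_def
proof (intro ballI allI impI)
  fix x y cS assume "GS x y = Some cS"
  then obtain c where c: "G x y = Some c" and cS: "cS = N * c + pp x y" by (auto simp: gpS_eq)
  note b = adj_bd[of u x] adj_bd[of u y] pp_bd[of x y] N4
  from edge_f0[OF c, of u] show "fS u y \<le> fS u x + cS"
  proof
    assume h: "f0 u y + 1 \<le> f0 u x + c"
    have "N * (f0 u y + 1) \<le> N * (f0 u x + c)" using h N4 by (intro mult_left_mono) auto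
    then show ?thesis using b unfolding fS_def cS by (simp add: algebra_simps)
  next
    assume h: "f0 u y \<le> f0 u x + c \<and> adj u y \<le> adj u x + pp x y"
    have "N * f0 u y \<le> N * (f0 u x + c)" using h N4 by (intro mult_left_mono) auto
    then show ?thesis using h unfolding fS_def cS by (simp add: algebra_simps)
  qed
qed

lemma walk_A:
  assumes u: "u \<in> V" and q: "q \<in> Vs"
  shows "\<exists>xs. is_walk Vs G xs \<and> hd xs = (u, PA) \<and> last xs = q \<and>
     walk_weight G xs = f0 u q \<and> walk_weight GS xs = fS u q"
proof -
  obtain v Q where qq: "q = (v, Q)" and v: "v \<in> V" using q by (cases q) (auto simp: gp_verts_def)
  show ?thesis
  proof (cases Q)
    case PA
    show ?thesis
    proof (cases "v = u")
      case True
      then show ?thesis using u by (intro exI[of _ "[(u, PA)]"]) (auto simp: qq PA gp_verts_def f0_def fS_def adj_def)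
    next
      case False
      then show ?thesis using u v
        by (intro exI[of _ "[(u, PA), q]"]) (auto simp: qq PA gp_verts_def f0_def fS_def adj_def gpS_eq gp_def pp_def)
    qed
  next
    case PB
    then show ?thesis using u v
      by (intro exI[of _ "[(u, PA), q]"]) (auto simp: qq gp_verts_def f0_def fS_def adj_def gpS_eq gp_def pp_def sg_def)
  next
    case PB'
    then show ?thesis using u v
      by (intro exI[of _ "[(u, PA), q]"]) (auto simp: qq gp_verts_def f0_def fS_def adj_def gpS_eq gp_def pp_def sg_def)
  next
    case PC'
    then show ?thesis using u v
      by (intro exI[of _ "[(u, PA), q]"]) (auto simp: qq gp_verts_def f0_def fS_def adj_def gpS_eq gp_def pp_def sg_def)
  next
    case PC
    from cmin_cases[of u v] show ?thesis
    proof
      assume h: "cmin u v = 600 * M - wx v u"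
      then show ?thesis using u v
        by (intro exI[of _ "[(u, PA), q]"]) (auto simp: qq PC gp_verts_def f0_def fS_def adj_def gpS_eq gp_def pp_def sg_def)
    next
      assume "\<exists>x\<in>V. cmin u v = 600 * M + wx u x + wx x v"
      then obtain x where x: "x \<in> V" and h: "cmin u v = 600 * M + wx u x + wx x v" by blast
      then show ?thesis using u v
        by (intro exI[of _ "[(u, PA), (x, PB), q]"])
          (auto simp: qq PC gp_verts_def f0_def fS_def adj_def gpS_eq gp_def pp_def sg_def algebra_simps)
    qed
  qed
qed

lemma dist_A:
  assumes u: "u \<in> V" and q: "q \<in> Vs"
  shows "gdist Vs G (u, PA) q = f0 u q" "gdist Vs GS (u, PA) q = fS u q"
proof -
  obtain xs where xs: "is_walk Vs G xs" "hd xs = (u, PA)" "last xs = q"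
     "walk_weight G xs = f0 u q" "walk_weight GS xs = fS u q"
    using walk_A[OF u q] by blast
  have xsS: "is_walk Vs GS xs" using xs walk_S_iff by simp
  have z: "f0 u (u, PA) = 0" "fS u (u, PA) = 0" by (auto simp: f0_def fS_def adj_def)
  show "gdist Vs G (u, PA) q = f0 u q"
    using gdist_ge[OF pot_G[of u] xs(1-3)] gdist_le[OF pot_G[of u] xs(1-3)] xs(4) z by simp
  show "gdist Vs GS (u, PA) q = fS u q"
    using gdist_ge[OF pot_GS[of u] xsS xs(2,3)] gdist_le[OF pot_GS[of u] xsS xs(2,3)] xs(5) z by simp
qed


lemma sum_Vs: "(\<Sum>q\<in>Vs. f q) = (\<Sum>v\<in>V. f (v,PA) + f (v,PB) + f (v,PB') + f (v,PC) + f (v,PC'))"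
proof -
  have "(\<Sum>v\<in>V. \<Sum>P\<in>UNIV. f (v,P)) = (\<Sum>(v,P)\<in>V\<times>UNIV. f (v,P))"
    by (rule sum.cartesian_product)
  also have "\<dots> = (\<Sum>q\<in>Vs. f q)" by (simp add: gp_verts_def)
  finally show ?thesis unfolding part_UNIV by (simp add: add.assoc)
qed

lemma DA_eq: "u \<in> V \<Longrightarrow> dist_sum Vs G (u, PA) = (\<Sum>q\<in>Vs. f0 u q)"
  unfolding dist_sum_def using dist_A by simp

lemma DSA_eq: "u \<in> V \<Longrightarrow> dist_sum Vs GS (u, PA) = N * dist_sum Vs G (u, PA) - sg u * int (card V)"
proof -
  assume u: "u \<in> V"
  have "dist_sum Vs GS (u, PA) = (\<Sum>q\<in>Vs. fS u q)"
    unfolding dist_sum_def using dist_A[OF u] by simp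
  also have "\<dots> = N * (\<Sum>q\<in>Vs. f0 u q) + (\<Sum>q\<in>Vs. adj u q)"
    unfolding fS_def by (simp add: sum.distrib sum_distrib_left)
  also have "(\<Sum>q\<in>Vs. adj u q) = - sg u * int (card V)"
    unfolding sum_Vs by (simp add: adj_def)
  finally show ?thesis using DA_eq[OF u] by simp
qed

lemma DA_le: "u \<in> V \<Longrightarrow> dist_sum Vs G (u, PA) \<le> int (card V) * (1600 * M)"
proof -
  assume u: "u \<in> V"
  have "(\<Sum>q\<in>Vs. f0 u q) \<le> int (card V) * (1600 * M)"
    unfolding sum_Vs
  proof (rule sum_bounded_above)
    fix v assume "v \<in> V"
    show "f0 u (v, PA) + f0 u (v, PB) + f0 u (v, PB') + f0 u (v, PC) + f0 u (v, PC') \<le> 1600 * M"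
      using cmin_le1[of u v] M1 by (cases "v = u") (simp_all add: f0_def)
  qed
  then show ?thesis using DA_eq[OF u] by simp
qed

definition tier :: "'a \<times> part \<Rightarrow> 'a \<times> part \<Rightarrow> int" where
  "tier p q = (if q = p then 0 else if snd q = PA \<or> (snd p = PB \<and> snd q = PC) \<or> (snd p = PC \<and> snd q = PB) then 1 else 2)"

lemma edge_tier:
  assumes "snd p \<noteq> PA" "G x y = Some c"
  shows "tier p y \<le> tier p x + 1 \<and> (tier p y \<le> tier p x \<or> 296 * M \<le> c) \<and> 100 * M \<le> c"
proof -
  obtain a P b Q where xy: "x = (a, P)" "y = (b, Q)" by (cases x, cases y) auto
  obtain u0 P0 where p: "p = (u0, P0)" by (cases p) auto
  note bd = wx_bd[of a b] wx_bd[of b a]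
  show ?thesis using assms M1 bd unfolding xy p
    by (cases P; cases Q; cases P0) (auto simp: gp_def tier_def split: if_splits)
qed

lemma conn:
  assumes "p \<in> Vs" "q \<in> Vs"
  shows "\<exists>xs. is_walk Vs G xs \<and> hd xs = p \<and> last xs = q"
proof -
  obtain a P b Q where pq: "p = (a, P)" "q = (b, Q)" and ab: "a \<in> V" "b \<in> V"
    using assms by (cases p, cases q) (auto simp: gp_verts_def)
  show ?thesis
  proof (cases "p = q")
    case True then show ?thesis using assms by (intro exI[of _ "[p]"]) auto
  next
    case False
    show ?thesis
    proof (cases "P = PA \<or> Q = PA")
      case True
      then show ?thesis using False ab unfolding pq
        by (intro exI[of _ "[(a, P), (b, Q)]"]) (cases P; cases Q; auto simp: gp_def gp_verts_def)
    next
      case F: False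
      then show ?thesis using ab unfolding pq
        by (intro exI[of _ "[(a, P), (a, PA), (b, Q)]"]) (cases P; cases Q; auto simp: gp_def gp_verts_def)
    qed
  qed
qed

lemma tier_sum:
  assumes p: "p \<in> Vs" "snd p \<noteq> PA"
  shows "(\<Sum>q\<in>Vs. tier p q) \<ge> 8 * int (card V) - 2"
proof -
  obtain u0 P0 where pp0: "p = (u0, P0)" and u0: "u0 \<in> V" using p by (cases p) (auto simp: gp_verts_def)
  have "(\<Sum>v\<in>V. (if v = u0 then 6 else 8 :: int)) \<le>
        (\<Sum>v\<in>V. tier p (v,PA) + tier p (v,PB) + tier p (v,PB') + tier p (v,PC) + tier p (v,PC'))"
    using p(2) unfolding pp0 by (intro sum_mono) (cases P0; auto simp: tier_def)
  moreover have "(\<Sum>v\<in>V. (if v = u0 then 6 else 8 :: int)) = 8 * int (card V) - 2"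
  proof -
    have "(\<Sum>v\<in>V. (if v = u0 then 6 else 8 :: int)) = 6 + (\<Sum>v\<in>V - {u0}. (if v = u0 then 6 else 8 :: int))"
      using sum.remove[OF finV u0, of "\<lambda>v. if v = u0 then 6 else (8::int)"] by simp
    also have "(\<Sum>v\<in>V - {u0}. (if v = u0 then 6 else 8 :: int)) = (\<Sum>v\<in>V - {u0}. 8)"
      by (intro sum.cong) auto
    also have "\<dots> = 8 * (int (card V) - 1)" using u0 finV n1 by (simp add: of_nat_diff)
    finally show ?thesis by simp
  qed
  ultimately show ?thesis unfolding sum_Vs by simp
qed

lemma nonA_bounds:
  assumes p: "p \<in> Vs" "snd p \<noteq> PA"
  shows "dist_sum Vs G p \<ge> 296 * M * (8 * int (card V) - 2)"
    and "dist_sum Vs GS p \<ge> (N * (296 * M) - 1) * (8 * int (card V) - 2)"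
proof -
  have tp: "tier p p = 0" by (simp add: tier_def)
  have NM: "N * M \<ge> 4" using mult_mono[of 4 N 1 M] N4 M1 by simp
  have K0: "N * (296 * M) - 1 \<ge> 0" using NM by (simp add: ac_simps)
  have pot1: "is_pot Vs G (\<lambda>q. 296 * M * tier p q)"
    unfolding is_pot_def
  proof (intro ballI allI impI)
    fix x y c assume "G x y = Some c"
    note e = edge_tier[OF p(2) this]
    show "296 * M * tier p y \<le> 296 * M * tier p x + c"
    proof (cases "tier p y \<le> tier p x")
      case True
      then have "296 * M * tier p y \<le> 296 * M * tier p x" using M1 by (intro mult_left_mono) auto
      then show ?thesis using e M1 by linarith
    next
      case False
      then have t: "tier p y = tier p x + 1" "296 * M \<le> c" using e by auto
      then show ?thesis by (simp add: algebra_simps)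
    qed
  qed
  have pot2: "is_pot Vs GS (\<lambda>q. (N * (296 * M) - 1) * tier p q)"
    unfolding is_pot_def
  proof (intro ballI allI impI)
    fix x y cS assume "GS x y = Some cS"
    then obtain c where c: "G x y = Some c" and cS: "cS = N * c + pp x y" by (auto simp: gpS_eq)
    have e: "tier p y \<le> tier p x + 1" "tier p y \<le> tier p x \<or> 296 * M \<le> c" "100 * M \<le> c"
      using edge_tier[OF p(2) c] by auto
    have K: "N * (296 * M) - 1 \<ge> 0" using K0 .
    have Nc: "N * (100 * M) \<le> N * c" using e(3) N4 by (intro mult_left_mono) auto
    have Nc0: "N * (100 * M) \<ge> 400" using NM by (simp add: ac_simps)
    show "(N * (296 * M) - 1) * tier p y \<le> (N * (296 * M) - 1) * tier p x + cS"
    proof (cases "tier p y \<le> tier p x")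
      case True
      then have "(N * (296 * M) - 1) * tier p y \<le> (N * (296 * M) - 1) * tier p x"
        using K by (intro mult_left_mono) auto
      then show ?thesis using cS Nc Nc0 pp_bd[of x y] by linarith
    next
      case False
      then have t: "tier p y = tier p x + 1" "296 * M \<le> c" using e by auto
      have "N * (296 * M) \<le> N * c" using t(2) N4 by (intro mult_left_mono) auto
      moreover have "(N * (296 * M) - 1) * (tier p x + 1) = (N * (296 * M) - 1) * tier p x + N * (296 * M) - 1"
        by (simp add: algebra_simps)
      ultimately show ?thesis using cS pp_bd[of x y] unfolding t(1) by linarith
    qed
  qed
  have "dist_sum Vs G p \<ge> (\<Sum>q\<in>Vs. 296 * M * tier p q)"
    unfolding dist_sum_def
  proof (rule sum_mono)
    fix q assume "q \<in> Vs"
    then obtain xs where "is_walk Vs G xs" "hd xs = p" "last xs = q" using conn p by blast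
    from gdist_ge[OF pot1 this] tp show "296 * M * tier p q \<le> gdist Vs G p q" by simp
  qed
  moreover have "(\<Sum>q\<in>Vs. 296 * M * tier p q) = 296 * M * (\<Sum>q\<in>Vs. tier p q)"
    by (simp add: sum_distrib_left)
  moreover have "296 * M * (\<Sum>q\<in>Vs. tier p q) \<ge> 296 * M * (8 * int (card V) - 2)"
    using tier_sum[OF p] M1 by (intro mult_left_mono) auto
  ultimately show "dist_sum Vs G p \<ge> 296 * M * (8 * int (card V) - 2)" by linarith
  have "dist_sum Vs GS p \<ge> (\<Sum>q\<in>Vs. (N * (296 * M) - 1) * tier p q)"
    unfolding dist_sum_def
  proof (rule sum_mono)
    fix q assume "q \<in> Vs"
    then obtain xs where "is_walk Vs G xs" "hd xs = p" "last xs = q" using conn p by blast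
    then have "is_walk Vs GS xs" "hd xs = p" "last xs = q" using walk_S_iff by auto
    from gdist_ge[OF pot2 this] tp show "(N * (296 * M) - 1) * tier p q \<le> gdist Vs GS p q" by simp
  qed
  moreover have "(\<Sum>q\<in>Vs. (N * (296 * M) - 1) * tier p q) = (N * (296 * M) - 1) * (\<Sum>q\<in>Vs. tier p q)"
    by (simp add: sum_distrib_left)
  moreover have "(N * (296 * M) - 1) * (\<Sum>q\<in>Vs. tier p q) \<ge> (N * (296 * M) - 1) * (8 * int (card V) - 2)"
    using tier_sum[OF p] K0 by (intro mult_left_mono) auto
  ultimately show "dist_sum Vs GS p \<ge> (N * (296 * M) - 1) * (8 * int (card V) - 2)" by linarith
qed


lemma main: "odd (median_value Vs GS) \<longleftrightarrow> (\<exists>p\<in>S. dist_sum Vs G p = median_value Vs G)"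
proof -
  define n where "n = int (card V)"
  have n1': "n \<ge> 1" using n1 by (simp add: n_def)
  have oddn': "odd n" using oddn by (simp add: n_def)
  have Nn: "N = 4 * n" by (simp add: n_def)
  have finVs: "finite Vs" unfolding gp_verts_def using finV part_UNIV
    by (metis finite.emptyI finite.insertI finite_cartesian_product)
  have Vne: "V \<noteq> {}" using n1 by auto
  define DA where "DA v = dist_sum Vs G (v, PA)" for v
  define m where "m = Min (DA ` V)"
  have "m \<in> DA ` V" unfolding m_def using finV Vne by (intro Min_in) auto
  then obtain v0 where v0: "v0 \<in> V" "DA v0 = m" by auto
  have mle: "v \<in> V \<Longrightarrow> m \<le> DA v" for v unfolding m_def using finV by simp
  have mup: "m \<le> n * (1600 * M)" using DA_le[OF v0(1)] v0(2) by (simp add: DA_def n_def)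
  have big1: "dist_sum Vs G p > n * (1600 * M)" if p: "p \<in> Vs" "snd p \<noteq> PA" for p
  proof -
    have "296 * M * (8 * n - 2) - n * (1600 * M) = M * (768 * n - 592)" by (simp add: algebra_simps)
    moreover have "M * (768 * n - 592) > 0" using M1 n1' by (intro mult_pos_pos) auto
    ultimately show ?thesis using nonA_bounds(1)[OF p] by (simp add: n_def)
  qed
  have big2: "dist_sum Vs GS p > N * (n * (1600 * M))" if p: "p \<in> Vs" "snd p \<noteq> PA" for p
  proof -
    have e: "(N * (296 * M) - 1) * (8 * n - 2) - N * (n * (1600 * M)) = (N * M) * (768 * n - 592) - 8 * n + 2"
      by (simp add: algebra_simps)
    have "(N * M) * (768 * n - 592) \<ge> (N * M) * 176"
      using n1' N4 M1 by (intro mult_left_mono) auto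
    moreover have "N * M \<ge> 4 * n" unfolding Nn using M1 n1' by simp
    ultimately have "(N * (296 * M) - 1) * (8 * n - 2) - N * (n * (1600 * M)) > 0" using e n1' by linarith
    then show ?thesis using nonA_bounds(2)[OF p] by (simp add: n_def)
  qed
  have Nm: "N * m \<le> N * (n * (1600 * M))" using mup N4 by (intro mult_left_mono) auto
  have DSA: "dist_sum Vs GS (v, PA) = N * DA v - sg v * n" if "v \<in> V" for v
    using DSA_eq[OF that] by (simp add: DA_def n_def)
  have AVs: "(v, PA) \<in> Vs" if "v \<in> V" for v using that by (simp add: gp_verts_def)
  have med: "median_value Vs G = m"
    unfolding median_value_def
  proof (rule Min_eqI)
    show "finite (dist_sum Vs G ` Vs)" using finVs by simp
    show "m \<in> dist_sum Vs G ` Vs" using v0 AVs unfolding DA_def by force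
    fix y assume "y \<in> dist_sum Vs G ` Vs"
    then obtain p where p: "p \<in> Vs" "y = dist_sum Vs G p" by auto
    obtain v P where vP: "p = (v, P)" "v \<in> V" using p by (cases p) (auto simp: gp_verts_def)
    show "m \<le> y"
    proof (cases "P = PA")
      case True then show ?thesis using mle[OF vP(2)] p vP by (simp add: DA_def)
    next
      case False then show ?thesis using big1[OF p(1)] mup p vP by force
    qed
  qed
  let ?C = "\<exists>v\<in>V. (v, PA) \<in> S \<and> DA v = m"
  have rhs: "(\<exists>p\<in>S. dist_sum Vs G p = median_value Vs G) \<longleftrightarrow> ?C"
    using SA unfolding med DA_def by auto
  have sg01: "sg v = 0 \<or> sg v = 1" for v by (simp add: sg_def)
  show ?thesis
  proof (cases ?C)
    case True
    then obtain v where v: "v \<in> V" "(v, PA) \<in> S" "DA v = m" by blast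
    have "median_value Vs GS = N * m - n"
      unfolding median_value_def
    proof (rule Min_eqI)
      show "finite (dist_sum Vs GS ` Vs)" using finVs by simp
      show "N * m - n \<in> dist_sum Vs GS ` Vs"
        using DSA[OF v(1)] v AVs[OF v(1)] by (force simp: sg_def)
      fix y assume "y \<in> dist_sum Vs GS ` Vs"
      then obtain p where p: "p \<in> Vs" "y = dist_sum Vs GS p" by auto
      obtain x P where xP: "p = (x, P)" "x \<in> V" using p by (cases p) (auto simp: gp_verts_def)
      show "N * m - n \<le> y"
      proof (cases "P = PA")
        case True
        have "N * m \<le> N * DA x" using mle[OF xP(2)] N4 by (intro mult_left_mono) auto
        moreover have "y = N * DA x - sg x * n" using DSA[OF xP(2)] p xP True by simp
        moreover have "sg x * n \<le> n" using sg01[of x] n1' by auto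
        ultimately show ?thesis by linarith
      next
        case False
        then have "dist_sum Vs GS p > N * (n * (1600 * M))" using big2[OF p(1)] xP by simp
        then show ?thesis using Nm p n1' by linarith
      qed
    qed
    moreover have "odd (N * m - n)" using oddn' unfolding Nn by simp
    ultimately show ?thesis using rhs True by simp
  next
    case False
    have "median_value Vs GS = N * m"
      unfolding median_value_def
    proof (rule Min_eqI)
      show "finite (dist_sum Vs GS ` Vs)" using finVs by simp
      have "(v0, PA) \<notin> S" using False v0 by blast
      then show "N * m \<in> dist_sum Vs GS ` Vs"
        using DSA[OF v0(1)] v0 AVs[OF v0(1)] by (force simp: sg_def)
      fix y assume "y \<in> dist_sum Vs GS ` Vs"
      then obtain p where p: "p \<in> Vs" "y = dist_sum Vs GS p" by auto
      obtain x P where xP: "p = (x, P)" "x \<in> V" using p by (cases p) (auto simp: gp_verts_def)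
      show "N * m \<le> y"
      proof (cases "P = PA")
        case True
        show ?thesis
        proof (cases "(x, PA) \<in> S")
          case True
          then have "DA x \<ge> m + 1" using False mle[OF xP(2)] xP(2) by force
          then have "N * (m + 1) \<le> N * DA x" using N4 by (intro mult_left_mono) auto
          then show ?thesis using DSA[OF xP(2)] p xP \<open>P = PA\<close> True N4 Nn
            by (auto simp: sg_def algebra_simps)
        next
          case F: False
          have "N * m \<le> N * DA x" using mle[OF xP(2)] N4 by (intro mult_left_mono) auto
          then show ?thesis using DSA[OF xP(2)] p xP True F by (auto simp: sg_def)
        qed
      next
        case False
        then have "dist_sum Vs GS p > N * (n * (1600 * M))" using big2[OF p(1)] xP by simp
        then show ?thesis using Nm p by linarith
      qed
    qed
    moreover have "even (N * m)" unfolding Nn by simp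
    ultimately show ?thesis using rhs False by simp
  qed
qed

end

theorem mainTheorem8:
  fixes V :: "'a set" and E :: "('a \<times> 'a) set" and w :: "'a \<Rightarrow> 'a \<Rightarrow> int"
    and M :: int and S :: "('a \<times> part) set"
  assumes "finite V" and "odd (card V)"
    and "E \<subseteq> V \<times> V"
    and "M \<ge> 1"
    and "\<forall>(u, v)\<in>E. \<bar>w u v\<bar> \<le> M"
    and "S \<subseteq> (\<lambda>u. (u, PA)) ` V"
  shows "odd (median_value (gp_verts V) (gpS V E w M S)) \<longleftrightarrow>
    (\<exists>p\<in>S. dist_sum (gp_verts V) (gp V E w M) p = median_value (gp_verts V) (gp V E w M))"
proof -
  interpret mt V E w M S using assms by unfold_locales auto
  show ?thesis by (rule main)
qed

end
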